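(* With $D(x)=1-2x-3x^2$, $$F(x)=\sum_{s\ge0}f(s)x^s=\frac{\big(-1+x+\sqrt{D(x)}\big)^2}{4x^2D(x)},\qquad G(x)=\sum_{s\ge0}g(s)x^s=-\frac{\big(-1+x+\sqrt{D(x)}\big)^3}{8x^2D(x)^{3/2}}.$$
   Context: For an integer $s\ge 0$, let $T_s$ be the set of positive integers not expressible as $k_1s+k_2(s+1)+k_3(s+2)$ with $k_i$ nonnegative integers, ordered by $y\ge x$ iff there is a chain $y=y_0,\ldots,y_l=x$ in $T_s$ with consecutive differences in $\{s,s+1,s+2\}$. One has $T_s=\bigcup_{k=0}^{\lfloor s/2\rfloor-1}B_k$ with $B_k=\{1+k(s+2),\ldots,(k+1)s-1\}$, and the rank function is $\rho_s(a)=k$ for $a\in B_k$. Let $J(T_s)$ be the set of order ideals of $T_s$. Define $f(s)=\sum_{I\in J(T_s)}|I|$ and $g(s)=\sum_{I\in J(T_s)}\sum_{a\in I}\rho_s(a)$. *)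

theory Defs
  imports Complex_Main
begin

definition T :: "nat \<Rightarrow> nat set" where
  "T s = {n. 0 < n \<and> \<not> (\<exists>k1 k2 k3. n = k1 * s + k2 * (s + 1) + k3 * (s + 2))}"

definition step :: "nat \<Rightarrow> nat \<Rightarrow> nat \<Rightarrow> bool" where
  "step s y x \<longleftrightarrow> y \<in> T s \<and> x \<in> T s \<and> x \<le> y \<and> y - x \<in> {s, s + 1, s + 2}"

definition leqT :: "nat \<Rightarrow> nat \<Rightarrow> nat \<Rightarrow> bool" where
  "leqT s x y \<longleftrightarrow> x \<in> T s \<and> y \<in> T s \<and> (step s)\<^sup>*\<^sup>* y x"

definition J :: "nat \<Rightarrow> nat set set" where
  "J s = {I. I \<subseteq> T s \<and> (\<forall>y\<in>I. \<forall>x. leqT s x y \<longrightarrow> x \<in> I)}"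

definition B :: "nat \<Rightarrow> nat \<Rightarrow> nat set" where
  "B s k = {1 + k * (s + 2) .. (k + 1) * s - 1}"

definition rho :: "nat \<Rightarrow> nat \<Rightarrow> nat" where
  "rho s a = (THE k. k < s div 2 \<and> a \<in> B s k)"

definition f :: "nat \<Rightarrow> nat" where
  "f s = (\<Sum>I\<in>J s. card I)"

definition g :: "nat \<Rightarrow> nat" where
  "g s = (\<Sum>I\<in>J s. \<Sum>a\<in>I. rho s a)"

definition D :: "real \<Rightarrow> real" where
  "D x = 1 - 2 * x - 3 * x^2"

end

theory Submission
  imports Defs "HOL-Analysis.FPS_Convergence"
begin

unbundle no vec_syntax
unbundle fps_syntax


lemma T_char:
  "n \<in> T s \<longleftrightarrow> n div Suc s < n mod Suc s \<and> n div Suc s + n mod Suc s < s"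
proof -
  define k where "k = n div Suc s"
  define c where "c = n mod Suc s"
  have n: "n = k * Suc s + c" unfolding k_def c_def by (metis div_mult_mod_eq)
  have cs: "c \<le> s" unfolding c_def using mod_less_divisor[of "Suc s" n] by linarith
  show ?thesis unfolding k_def[symmetric] c_def[symmetric]
  proof
    assume nT: "n \<in> T s"
    show "k < c \<and> k + c < s"
    proof (rule ccontr)
      assume "\<not> (k < c \<and> k + c < s)"
      then consider "c \<le> k" | "s \<le> k + c" by linarith
      then have "\<exists>k1 k2 k3. n = k1 * s + k2 * (s + 1) + k3 * (s + 2)"
      proof cases
        case 1
        obtain e where ke: "k = c + e" using 1 le_Suc_ex by blast
        have "n = 0 * s + (k - c) * (s + 1) + c * (s + 2)"
          unfolding n ke by (simp add: algebra_simps)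
        then show ?thesis by blast
      next
        case 2
        define d where "d = Suc s - c"
        have dk: "d \<le> k + 1" using 2 cs unfolding d_def by linarith
        have "n = d * s + (k + 1 - d) * (s + 1) + 0 * (s + 2)"
        proof -
          obtain e where ke: "k + 1 = d + e" using dk le_Suc_ex by blast
          have "n + d = (k+1)*(s+1)" unfolding n d_def using cs by (simp add: algebra_simps)
          also have "\<dots> = d * s + d + e*(s+1)" unfolding ke by (simp add: algebra_simps)
          finally have "n = d * s + e * (s+1)" by linarith
          moreover have "k + 1 - d = e" using ke by simp
          ultimately show ?thesis by simp
        qed
        then show ?thesis by blast
      qed
      with nT show False unfolding T_def by blast
    qed
  next
    assume kc: "k < c \<and> k + c < s"
    show "n \<in> T s" unfolding T_def
    proof (intro CollectI conjI notI)
      show "0 < n" using kc n by simp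
      assume "\<exists>k1 k2 k3. n = k1 * s + k2 * (s + 1) + k3 * (s + 2)"
      then obtain k1 k2 k3 where e: "n = k1 * s + k2 * (s + 1) + k3 * (s + 2)" by blast
      define m where "m = k1 + k2 + k3"
      have e2: "n = m * s + k2 + 2 * k3" unfolding e m_def by (simp add: algebra_simps)
      show False
      proof (cases "m \<le> k")
        case True
        have "m * s \<le> k * s" using True by simp
        moreover have "k2 + 2 * k3 \<le> 2 * m" unfolding m_def by simp
        ultimately have "n \<le> k * s + 2 * k" using e2 True by linarith
        then show False using n kc by simp
      next
        case False
        then have "(k+1) * s \<le> m * s" by (intro mult_le_mono1) simp
        then have "(k+1) * s \<le> n" using e2 by linarith
        then show False using n kc by (simp add: algebra_simps)
      qed
    qed
  qed
qed

lemma divmod_eq: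
  assumes "c < Suc s" shows "(k * Suc s + c) div Suc s = k" "(k * Suc s + c) mod Suc s = c"
proof -
  have "(k * Suc s + c) div Suc s = (c + k * Suc s) div Suc s" by (simp only: add.commute)
  also have "\<dots> = k + c div Suc s" by (rule div_mult_self1) simp
  finally show "(k * Suc s + c) div Suc s = k" using assms by simp
  have "(k * Suc s + c) mod Suc s = (c + k * Suc s) mod Suc s" by (simp only: add.commute)
  also have "\<dots> = c mod Suc s" by (rule mod_mult_self1)
  finally show "(k * Suc s + c) mod Suc s = c" using assms by simp
qed

lemma T_decomp: assumes "a \<in> T s"
  obtains k c where "a = k * Suc s + c" "k < c" "k + c < s"
  using assms T_char[of a s] by (metis div_mult_mod_eq)

lemma T_kc: "c < Suc s \<Longrightarrow> k * Suc s + c \<in> T s \<longleftrightarrow> k < c \<and> k + c < s"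
  by (simp only: T_char divmod_eq)

lemma B_div: assumes "a \<in> B s k" shows "a div Suc s = k"
proof -
  from assms have a1: "1 + k * (s + 2) \<le> a" and a2: "a \<le> (k + 1) * s - 1" by (auto simp: B_def)
  have "k * Suc s \<le> a" using a1 by (simp add: algebra_simps)
  then obtain c where ac: "a = k * Suc s + c" using le_Suc_ex by blast
  have "c < Suc s"
  proof (rule ccontr)
    assume "\<not> c < Suc s"
    then have "(k+1) * s < a" using ac by (simp add: algebra_simps)
    with a2 show False by linarith
  qed
  then show ?thesis using ac by (simp only: divmod_eq)
qed

lemma rho_T: assumes "a \<in> T s" shows "rho s a = a div Suc s"
proof -
  obtain k c where ac: "a = k * Suc s + c" "k < c" "k + c < s" using T_decomp[OF assms] .
  have cs: "c < Suc s" using ac by simp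
  have kB: "a \<in> B s k"
    unfolding B_def using ac by (auto simp: algebra_simps)
  have ks: "k < s div 2" using ac by linarith
  show ?thesis unfolding rho_def
  proof (rule the_equality)
    show "a div Suc s < s div 2 \<and> a \<in> B s (a div Suc s)" using ac(1) cs kB ks by (simp only: divmod_eq)
    fix k' assume "k' < s div 2 \<and> a \<in> B s k'"
    then show "k' = a div Suc s" using B_div by auto
  qed
qed

lemma step_shape:
  assumes "step s y x"
  shows "y div Suc s = Suc (x div Suc s) \<and> y mod Suc s \<le> x mod Suc s + 1 \<and> x mod Suc s \<le> y mod Suc s + 1"
proof -
  from assms have yT: "y \<in> T s" and xT: "x \<in> T s" and xy: "x \<le> y" and d: "y - x \<in> {s, s+1, s+2}"
    unfolding step_def by auto
  obtain k c where x: "x = k * Suc s + c" "k < c" "k + c < s" using T_decomp[OF xT] .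
  from d xy consider "y = (k+1) * Suc s + (c - 1)" | "y = (k+1) * Suc s + c" | "y = (k+1) * Suc s + (c+1)"
    using x by (auto simp: algebra_simps)
  then show ?thesis
  proof cases
    case 1 then show ?thesis using x by (simp only: divmod_eq) (use x in auto)
  next
    case 2 then show ?thesis using x by (simp only: divmod_eq) (use x in auto)
  next
    case 3 then show ?thesis using x by (simp only: divmod_eq) (use x in auto)
  qed
qed

lemma step_intro:
  assumes "k * Suc s + c \<in> T s" "Suc k * Suc s + c' \<in> T s" "c' \<le> c + 1" "c \<le> c' + 1"
    and "c < Suc s"
  shows "step s (Suc k * Suc s + c') (k * Suc s + c)"
proof -
  have "c' = c - 1 \<or> c' = c \<or> c' = c + 1" using assms(3,4) by linarith
  moreover have "0 < c" using assms(1) T_kc[OF assms(5)] by auto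
  ultimately show ?thesis unfolding step_def using assms(1,2) by (auto simp: algebra_simps)
qed

lemma J_char: "I \<in> J s \<longleftrightarrow> I \<subseteq> T s \<and> (\<forall>y\<in>I. \<forall>x. step s y x \<longrightarrow> x \<in> I)"
proof
  assume "I \<in> J s"
  then show "I \<subseteq> T s \<and> (\<forall>y\<in>I. \<forall>x. step s y x \<longrightarrow> x \<in> I)"
    unfolding J_def leqT_def step_def by (auto simp: step_def)
next
  assume H: "I \<subseteq> T s \<and> (\<forall>y\<in>I. \<forall>x. step s y x \<longrightarrow> x \<in> I)"
  have "(step s)\<^sup>*\<^sup>* y x \<Longrightarrow> y \<in> I \<Longrightarrow> x \<in> I" for x y
    by (induction rule: rtranclp_induct) (use H in auto)
  then show "I \<in> J s" unfolding J_def leqT_def using H by auto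
qed

definition adj :: "nat \<Rightarrow> nat \<Rightarrow> bool" where
  "adj a b \<longleftrightarrow> b \<le> a + 1 \<and> a \<le> b + 1"

definition Pre :: "nat \<Rightarrow> nat \<Rightarrow> nat list set" where
  "Pre n k = {xs. length xs = Suc n \<and> successively adj xs \<and> hd xs = 0 \<and> last xs = k}"

lemma succ_nth: "successively P xs \<Longrightarrow> Suc i < length xs \<Longrightarrow> P (xs!i) (xs!Suc i)"
proof (induction P xs arbitrary: i rule: successively.induct)
  case (3 P x y xs)
  then show ?case by (cases i) auto
qed auto

lemma Pre_nth_le: assumes "xs \<in> Pre n k" "i \<le> n" shows "xs!i \<le> i"
  using assms(2)
proof (induction i)
  case 0
  then show ?case using assms(1) unfolding Pre_def by (cases xs) auto
next
  case (Suc i)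
  have "adj (xs!i) (xs!Suc i)" using succ_nth[of adj xs i] assms(1) Suc.prems unfolding Pre_def by auto
  then show ?case using Suc by (auto simp: adj_def)
qed

lemma adj_sym: "adj a b = adj b a" unfolding adj_def by auto

lemma Pre_rev: assumes "xs \<in> Pre n 0" shows "rev xs \<in> Pre n 0"
proof -
  have ne: "xs \<noteq> []" using assms unfolding Pre_def by auto
  have s1: "successively adj xs" using assms by (simp add: Pre_def)
  have "successively (\<lambda>x y. adj y x) xs" using s1 by (rule successively_mono) (auto simp: adj_def)
  then show ?thesis using assms ne unfolding Pre_def by (simp add: hd_rev last_rev)
qed

lemma Pre_nth_le2: assumes "xs \<in> Pre n 0" "i \<le> n" shows "xs!i \<le> n - i"
proof -
  have len: "length xs = Suc n" using assms unfolding Pre_def by auto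
  have "rev xs ! (n - i) \<le> n - i" using Pre_nth_le[OF Pre_rev[OF assms(1)]] by simp
  moreover have "rev xs ! (n - i) = xs ! i" using len assms(2) by (simp add: rev_nth)
  ultimately show ?thesis by simp
qed

lemma Pre_0: "Pre 0 k = (if k = 0 then {[0]} else {})"
proof -
  have "xs \<in> Pre 0 k \<longleftrightarrow> xs = [0] \<and> k = 0" for xs
    unfolding Pre_def by (cases xs) auto
  then show ?thesis by auto
qed

lemma Pre_Suc: "Pre (Suc n) k = (\<Union>k'\<in>{k-1..k+1}. (\<lambda>xs. xs @ [k]) ` Pre n k')"
proof (intro equalityI subsetI)
  fix ys assume ys: "ys \<in> Pre (Suc n) k"
  then have len: "length ys = Suc (Suc n)" by (simp add: Pre_def)
  define xs where "xs = butlast ys"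
  have ne: "ys \<noteq> []" using len by auto
  have ysx: "ys = xs @ [k]" using ys ne unfolding xs_def Pre_def by auto
  have xne: "xs \<noteq> []" using len unfolding xs_def by (cases ys rule: rev_cases) auto
  have sx: "successively adj (xs @ [k])" using ys ysx unfolding Pre_def by auto
  then have a: "adj (last xs) k" and sxs: "successively adj xs" using xne
    by (auto simp: successively_append_iff)
  have "xs \<in> Pre n (last xs)" using ys ysx xne sxs len unfolding Pre_def
    by (auto simp: hd_append)
  moreover have "last xs \<in> {k-1..k+1}" using a unfolding adj_def by auto
  ultimately show "ys \<in> (\<Union>k'\<in>{k-1..k+1}. (\<lambda>xs. xs @ [k]) ` Pre n k')"
    using ysx by blast
next
  fix ys assume "ys \<in> (\<Union>k'\<in>{k-1..k+1}. (\<lambda>xs. xs @ [k]) ` Pre n k')"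
  then obtain k' xs where k': "k' \<in> {k-1..k+1}" and xs: "xs \<in> Pre n k'" and ys: "ys = xs @ [k]"
    by blast
  have xne: "xs \<noteq> []" using xs unfolding Pre_def by auto
  have "adj k' k" using k' unfolding adj_def by auto
  then show "ys \<in> Pre (Suc n) k" using xs xne unfolding ys Pre_def
    by (auto simp: successively_append_iff hd_append)
qed

lemma finite_Pre: "finite (Pre n k)"
proof (induction n arbitrary: k)
  case 0 then show ?case by (simp add: Pre_0)
next
  case (Suc n) then show ?case by (simp add: Pre_Suc)
qed

definition p :: "nat \<Rightarrow> nat \<Rightarrow> nat" where "p n k = card (Pre n k)"

lemma p_0: "p 0 k = (if k = 0 then 1 else 0)"
  by (simp add: p_def Pre_0)

lemma p_Suc: "p (Suc n) k = (\<Sum>k'\<in>{k-1..k+1}. p n k')"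
proof -
  have "p (Suc n) k = card (\<Union>k'\<in>{k-1..k+1}. (\<lambda>xs. xs @ [k]) ` Pre n k')"
    by (simp add: p_def Pre_Suc)
  also have "\<dots> = (\<Sum>k'\<in>{k-1..k+1}. card ((\<lambda>xs. xs @ [k]) ` Pre n k'))"
  proof (rule card_UN_disjoint)
    show "finite {k-1..k+1}" by simp
    show "\<forall>i\<in>{k-1..k+1}. finite ((\<lambda>xs. xs @ [k]) ` Pre n i)" using finite_Pre by blast
    show "\<forall>i\<in>{k-1..k+1}. \<forall>j\<in>{k-1..k+1}. i \<noteq> j \<longrightarrow>
      (\<lambda>xs. xs @ [k]) ` Pre n i \<inter> (\<lambda>xs. xs @ [k]) ` Pre n j = {}"
      unfolding Pre_def by (auto simp del: successively.simps)
  qed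
  also have "\<dots> = (\<Sum>k'\<in>{k-1..k+1}. p n k')"
    unfolding p_def by (intro sum.cong refl card_image) (auto simp: inj_on_def)
  finally show ?thesis .
qed

definition Psi :: "nat \<Rightarrow> nat list \<Rightarrow> nat set" where
  "Psi s xs = {a \<in> T s. a div Suc s < xs ! (a mod Suc s)}"

definition Phi :: "nat \<Rightarrow> nat set \<Rightarrow> nat list" where
  "Phi s I = map (\<lambda>c. LEAST k. k * Suc s + c \<notin> I) [0..<Suc s]"

lemma memPsi:
  assumes "xs \<in> Pre s 0" "c < Suc s"
  shows "k * Suc s + c \<in> Psi s xs \<longleftrightarrow> k < xs ! c"
proof -
  have "xs ! c \<le> c" "xs ! c \<le> s - c" using Pre_nth_le[OF assms(1)] Pre_nth_le2[OF assms(1)] assms(2)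
    by auto
  then show ?thesis unfolding Psi_def using T_kc[OF assms(2)] divmod_eq[OF assms(2)] by auto
qed

lemma sum_Psi:
  assumes "xs \<in> Pre s 0"
  shows "(\<Sum>a\<in>Psi s xs. \<phi> a) = (\<Sum>c<Suc s. \<Sum>k<xs!c. \<phi> (k * Suc s + c))"
proof -
  let ?A = "SIGMA c:{..<Suc s}. {..<xs!c}"
  let ?g = "\<lambda>(c,k). k * Suc s + c"
  have eq: "Psi s xs = ?g ` ?A"
  proof (intro equalityI subsetI)
    fix a assume a: "a \<in> Psi s xs"
    have "a = (a div Suc s) * Suc s + a mod Suc s" by (metis div_mult_mod_eq)
    moreover have "(a mod Suc s, a div Suc s) \<in> ?A" using a unfolding Psi_def by auto
    ultimately show "a \<in> ?g ` ?A" by force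
  next
    fix a assume "a \<in> ?g ` ?A"
    then obtain c k where "c < Suc s" "k < xs!c" "a = k * Suc s + c" by auto
    then show "a \<in> Psi s xs" using memPsi[OF assms] by auto
  qed
  have inj: "inj_on ?g ?A"
  proof (rule inj_onI)
    fix u v assume u: "u \<in> ?A" and v: "v \<in> ?A" and e: "?g u = ?g v"
    obtain c k where [simp]: "u = (c,k)" by (cases u)
    obtain c' k' where [simp]: "v = (c',k')" by (cases v)
    have "c < Suc s" "c' < Suc s" using u v by auto
    then show "u = v" using e divmod_eq by (metis \<open>u = (c,k)\<close> \<open>v = (c',k')\<close> case_prod_conv)
  qed
  have "(\<Sum>a\<in>Psi s xs. \<phi> a) = (\<Sum>u\<in>?A. \<phi> (?g u))"
    unfolding eq by (rule sum.reindex[OF inj, unfolded comp_def])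
  also have "\<dots> = (\<Sum>c<Suc s. \<Sum>k<xs!c. \<phi> (k * Suc s + c))"
  proof -
    have "(\<lambda>u. \<phi> (?g u)) = (\<lambda>(c,k). \<phi> (k * Suc s + c))" by auto
    then show ?thesis by (simp only:) (rule sum.Sigma[symmetric]; auto)
  qed
  finally show ?thesis .
qed

lemma Pre_adj:
  assumes "xs \<in> Pre n k" "i \<le> n" "j \<le> n" "j \<le> i + 1" "i \<le> j + 1"
  shows "xs!j \<le> xs!i + 1"
proof -
  have len: "length xs = Suc n" and sx: "successively adj xs" using assms(1) by (auto simp: Pre_def)
  consider "j = i" | "j = Suc i" | "i = Suc j" using assms(4,5) by linarith
  then show ?thesis
  proof cases
    case 2 then show ?thesis using succ_nth[OF sx, of i] len assms(3) by (auto simp: adj_def)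
  next
    case 3 then show ?thesis using succ_nth[OF sx, of j] len assms(2) by (auto simp: adj_def)
  qed auto
qed

lemma Psi_J: assumes "xs \<in> Pre s 0" shows "Psi s xs \<in> J s"
  unfolding J_char
proof (intro conjI ballI allI impI)
  show "Psi s xs \<subseteq> T s" unfolding Psi_def by auto
  fix y x assume y: "y \<in> Psi s xs" and st: "step s y x"
  have xT: "x \<in> T s" using st by (simp add: step_def)
  note sh = step_shape[OF st]
  have "y mod Suc s < Suc s" "x mod Suc s < Suc s" by simp_all
  then have "y mod Suc s \<le> s" "x mod Suc s \<le> s" by linarith+
  then have "xs ! (y mod Suc s) \<le> xs ! (x mod Suc s) + 1"
    using Pre_adj[OF assms, of "x mod Suc s" "y mod Suc s"] sh by linarith
  moreover have "y div Suc s < xs ! (y mod Suc s)" using y by (simp add: Psi_def)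
  ultimately have "x div Suc s < xs ! (x mod Suc s)" using sh by linarith
  then show "x \<in> Psi s xs" using xT unfolding Psi_def by blast
qed

lemma col_down1:
  assumes I: "I \<in> J s" and c: "c < Suc s" and a: "Suc j * Suc s + c \<in> I"
  shows "j * Suc s + c \<in> I"
proof -
  have IT: "I \<subseteq> T s" and cl: "\<forall>y\<in>I. \<forall>x. step s y x \<longrightarrow> x \<in> I" using I J_char by auto
  have aT: "Suc j * Suc s + c \<in> T s" using a IT by auto
  have "Suc j < c \<and> Suc j + c < s" using aT T_kc[OF c, of "Suc j"] by blast
  then have "j < c \<and> j + c < s" by linarith
  then have "j * Suc s + c \<in> T s" using T_kc[OF c, of j] by blast
  then have "step s (Suc j * Suc s + c) (j * Suc s + c)" using aT c by (intro step_intro) auto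
  then show ?thesis using cl a by blast
qed

lemma col_down:
  assumes I: "I \<in> J s" and c: "c < Suc s" and a: "k * Suc s + c \<in> I" and jk: "j \<le> k"
  shows "j * Suc s + c \<in> I"
proof -
  have "(k - d) * Suc s + c \<in> I" for d
  proof (induction d)
    case 0 then show ?case using a by simp
  next
    case (Suc d)
    show ?case
    proof (cases "k - d = 0")
      case True then show ?thesis using Suc by simp
    next
      case False
      then have "k - d = Suc (k - Suc d)" by simp
      then show ?thesis using Suc col_down1[OF I c] by metis
    qed
  qed
  from this[of "k - j"] show ?thesis using jk by simp
qed

lemma h_char:
  assumes I: "I \<in> J s" and c: "c < Suc s"
  shows "k * Suc s + c \<in> I \<longleftrightarrow> k < (LEAST k. k * Suc s + c \<notin> I)"
proof -
  have IT: "I \<subseteq> T s" using I J_char by auto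
  have "c * Suc s + c \<notin> T s" using T_kc[OF c, of c] by simp
  then have ex: "c * Suc s + c \<notin> I" using IT by blast
  then have L: "(LEAST k. k * Suc s + c \<notin> I) * Suc s + c \<notin> I" by (rule LeastI)
  show ?thesis
  proof
    assume "k * Suc s + c \<in> I"
    then show "k < (LEAST k. k * Suc s + c \<notin> I)"
      using col_down[OF I c] L by (meson not_less)
  next
    assume "k < (LEAST k. k * Suc s + c \<notin> I)"
    then show "k * Suc s + c \<in> I" using not_less_Least by blast
  qed
qed

lemma succ_nthI: "(\<And>i. Suc i < length xs \<Longrightarrow> P (xs!i) (xs!Suc i)) \<Longrightarrow> successively P xs"
proof (induction P xs rule: successively.induct)
  case (3 P x y xs)
  have "P x y" using "3.prems"[of 0] by simp
  moreover have "successively P (y # xs)"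
    using "3.IH" "3.prems" by (metis Suc_less_eq length_Cons nth_Cons_Suc)
  ultimately show ?case by simp
qed auto

lemma Phi_Pre: assumes I: "I \<in> J s" shows "Phi s I \<in> Pre s 0"
proof -
  define h where "h c = (LEAST k. k * Suc s + c \<notin> I)" for c
  have hc: "c < Suc s \<Longrightarrow> k * Suc s + c \<in> I \<longleftrightarrow> k < h c" for c k
    unfolding h_def by (rule h_char[OF I])
  have IT: "I \<subseteq> T s" using I J_char by auto
  have Phi: "Phi s I = map h [0..<Suc s]" unfolding Phi_def h_def by simp
  have h0: "h 0 = 0"
  proof -
    have "0 * Suc s + 0 \<notin> T s" using T_kc[of 0 s 0] by simp
    then have "0 * Suc s + 0 \<notin> I" using IT by blast
    then show ?thesis using hc[of 0 0] by simp
  qed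
  have hs: "h s = 0"
  proof -
    have "0 * Suc s + s \<notin> T s" using T_kc[of s s 0] by simp
    then have "0 * Suc s + s \<notin> I" using IT by blast
    then show ?thesis using hc[of s 0] by simp
  qed
  have adjh: "adj (h i) (h (Suc i))" if i: "i < s" for i
  proof -
    have c1: "i < Suc s" "Suc i < Suc s" using i by auto
    have cl: "\<forall>y\<in>I. \<forall>x. step s y x \<longrightarrow> x \<in> I" using I J_char by auto
    have A: "h (Suc i) \<le> h i + 1"
    proof (rule ccontr)
      assume "\<not> h (Suc i) \<le> h i + 1"
      then have aI: "Suc (h i) * Suc s + Suc i \<in> I" using hc[OF c1(2), of "Suc (h i)"] by simp
      then have aT: "Suc (h i) * Suc s + Suc i \<in> T s" using IT by blast
      then have "Suc (h i) < Suc i \<and> Suc (h i) + Suc i < s" using T_kc[OF c1(2), of "Suc (h i)"] by blast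
      then have "h i < i \<and> h i + i < s" by linarith
      then have xT: "h i * Suc s + i \<in> T s" using T_kc[OF c1(1), of "h i"] by blast
      have "step s (Suc (h i) * Suc s + Suc i) (h i * Suc s + i)"
        by (rule step_intro[OF xT aT]) (use c1 in auto)
      then have "h i * Suc s + i \<in> I" using cl aI by blast
      then show False using hc[OF c1(1), of "h i"] by simp
    qed
    have B: "h i \<le> h (Suc i) + 1"
    proof (rule ccontr)
      assume "\<not> h i \<le> h (Suc i) + 1"
      then have aI: "Suc (h (Suc i)) * Suc s + i \<in> I" using hc[OF c1(1), of "Suc (h (Suc i))"] by simp
      then have aT: "Suc (h (Suc i)) * Suc s + i \<in> T s" using IT by blast
      then have "Suc (h (Suc i)) < i \<and> Suc (h (Suc i)) + i < s" using T_kc[OF c1(1), of "Suc (h (Suc i))"] by blast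
      then have "h (Suc i) < Suc i \<and> h (Suc i) + Suc i < s" by linarith
      then have xT: "h (Suc i) * Suc s + Suc i \<in> T s" using T_kc[OF c1(2), of "h (Suc i)"] by blast
      have "step s (Suc (h (Suc i)) * Suc s + i) (h (Suc i) * Suc s + Suc i)"
        by (rule step_intro[OF xT aT]) (use c1 in auto)
      then have "h (Suc i) * Suc s + Suc i \<in> I" using cl aI by blast
      then show False using hc[OF c1(2), of "h (Suc i)"] by simp
    qed
    show ?thesis using A B by (simp add: adj_def)
  qed
  have "successively adj (map h [0..<Suc s])"
  proof (rule succ_nthI)
    fix i assume "Suc i < length (map h [0..<Suc s])"
    then have i: "i < s" by simp
    then have "map h [0..<Suc s] ! i = h i" "map h [0..<Suc s] ! Suc i = h (Suc i)"
      by (simp_all only: nth_map length_upt nth_upt) simp_all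
    then show "adj (map h [0..<Suc s] ! i) (map h [0..<Suc s] ! Suc i)" using adjh[OF i] by simp
  qed
  moreover have "hd (map h [0..<Suc s]) = 0" using h0 by (simp add: upt_conv_Cons del: upt_Suc)
  moreover have "last (map h [0..<Suc s]) = 0" using hs by (simp add: last_map)
  ultimately show ?thesis unfolding Phi Pre_def by simp
qed

lemma Phi_Psi: assumes "xs \<in> Pre s 0" shows "Phi s (Psi s xs) = xs"
proof (rule nth_equalityI)
  have len: "length xs = Suc s" using assms by (simp add: Pre_def)
  then show "length (Phi s (Psi s xs)) = length xs" by (simp add: Phi_def)
  fix c assume "c < length (Phi s (Psi s xs))"
  then have c: "c < Suc s" by (simp add: Phi_def)
  have "(LEAST k. k * Suc s + c \<notin> Psi s xs) = xs ! c"
  proof (rule Least_equality)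
    show "xs ! c * Suc s + c \<notin> Psi s xs" using memPsi[OF assms c, of "xs ! c"] by simp
    fix y assume "y * Suc s + c \<notin> Psi s xs"
    then show "xs ! c \<le> y" using memPsi[OF assms c, of y] by simp
  qed
  then show "Phi s (Psi s xs) ! c = xs ! c" using c by (simp add: Phi_def del: upt_Suc)
qed

lemma Psi_Phi: assumes I: "I \<in> J s" shows "Psi s (Phi s I) = I"
proof -
  have IT: "I \<subseteq> T s" using I J_char by auto
  have "a \<in> Psi s (Phi s I) \<longleftrightarrow> a \<in> I" for a
  proof -
    define k where "k = a div Suc s"
    define c where "c = a mod Suc s"
    have c: "c < Suc s" unfolding c_def by simp
    have a: "a = k * Suc s + c" unfolding k_def c_def by (metis div_mult_mod_eq)
    have "Phi s I ! c = (LEAST k. k * Suc s + c \<notin> I)" using c by (simp add: Phi_def del: upt_Suc)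
    have "a \<in> Psi s (Phi s I) \<longleftrightarrow> a \<in> T s \<and> k < Phi s I ! c"
      unfolding Psi_def k_def c_def by blast
    also have "\<dots> \<longleftrightarrow> a \<in> T s \<and> k * Suc s + c \<in> I"
      using h_char[OF I c, of k] \<open>Phi s I ! c = _\<close> by simp
    finally have "a \<in> Psi s (Phi s I) \<longleftrightarrow> a \<in> T s \<and> a \<in> I" using a by simp
    then show ?thesis using IT by auto
  qed
  then show ?thesis by auto
qed

lemma bij_Psi: "bij_betw (Psi s) (Pre s 0) (J s)"
proof (rule bij_betw_byWitness[where f' = "Phi s"])
  show "\<forall>a\<in>Pre s 0. Phi s (Psi s a) = a" using Phi_Psi by blast
  show "\<forall>a'\<in>J s. Psi s (Phi s a') = a'" using Psi_Phi by blast
  show "Psi s ` Pre s 0 \<subseteq> J s" using Psi_J by blast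
  show "Phi s ` J s \<subseteq> Pre s 0" using Phi_Pre by blast
qed

lemma f_paths: "f s = (\<Sum>xs\<in>Pre s 0. \<Sum>c<Suc s. xs ! c)"
proof -
  have "f s = (\<Sum>xs\<in>Pre s 0. card (Psi s xs))"
    unfolding f_def by (rule sum.reindex_bij_betw[OF bij_Psi, symmetric])
  also have "\<dots> = (\<Sum>xs\<in>Pre s 0. \<Sum>c<Suc s. xs ! c)"
  proof (rule sum.cong[OF refl])
    fix xs assume xs: "xs \<in> Pre s 0"
    have "card (Psi s xs) = (\<Sum>a\<in>Psi s xs. 1)" by simp
    also have "\<dots> = (\<Sum>c<Suc s. \<Sum>k<xs!c. 1)" by (rule sum_Psi[OF xs])
    finally show "card (Psi s xs) = (\<Sum>c<Suc s. xs ! c)" by simp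
  qed
  finally show ?thesis .
qed

lemma g_paths: "g s = (\<Sum>xs\<in>Pre s 0. \<Sum>c<Suc s. \<Sum>k<xs ! c. k)"
proof -
  have "g s = (\<Sum>xs\<in>Pre s 0. \<Sum>a\<in>Psi s xs. rho s a)"
    unfolding g_def by (rule sum.reindex_bij_betw[OF bij_Psi, symmetric])
  also have "\<dots> = (\<Sum>xs\<in>Pre s 0. \<Sum>c<Suc s. \<Sum>k<xs ! c. k)"
  proof (rule sum.cong[OF refl])
    fix xs assume xs: "xs \<in> Pre s 0"
    have "(\<Sum>a\<in>Psi s xs. rho s a) = (\<Sum>c<Suc s. \<Sum>k<xs!c. rho s (k * Suc s + c))"
      by (rule sum_Psi[OF xs])
    also have "\<dots> = (\<Sum>c<Suc s. \<Sum>k<xs!c. k)"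
    proof (intro sum.cong refl)
      fix c k assume "c \<in> {..<Suc s}" "k \<in> {..<xs!c}"
      then have c: "c < Suc s" and "k < xs ! c" by auto
      then have "k * Suc s + c \<in> Psi s xs" using memPsi[OF xs c, of k] by blast
      then have "k * Suc s + c \<in> T s" unfolding Psi_def by blast
      then show "rho s (k * Suc s + c) = k" using rho_T divmod_eq(1)[OF c, of k] by metis
    qed
    finally show "(\<Sum>a\<in>Psi s xs. rho s a) = (\<Sum>c<Suc s. \<Sum>k<xs!c. k)" .
  qed
  finally show ?thesis .
qed

lemma succ_take: "successively P xs \<Longrightarrow> successively P (take n xs)"
  by (metis append_take_drop_id successively_append_iff)

lemma succ_drop: "successively P xs \<Longrightarrow> successively P (drop n xs)"
  by (metis append_take_drop_id successively_append_iff)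

lemma succ_rev_adj: "successively adj xs \<Longrightarrow> successively adj (rev xs)"
proof -
  assume "successively adj xs"
  then have "successively (\<lambda>x y. adj y x) xs" by (rule successively_mono) (auto simp: adj_def)
  then show ?thesis by simp
qed

lemma split_bij:
  assumes cs: "c \<le> s"
  shows "bij_betw (\<lambda>xs. (take (Suc c) xs, rev (drop c xs))) {xs \<in> Pre s 0. xs ! c = k}
           (Pre c k \<times> Pre (s - c) k)"
proof (rule bij_betw_byWitness[where f' = "\<lambda>(a,b). a @ tl (rev b)"])
  show "\<forall>xs\<in>{xs \<in> Pre s 0. xs ! c = k}. (\<lambda>(a,b). a @ tl (rev b)) (take (Suc c) xs, rev (drop c xs)) = xs"
  proof
    fix xs assume "xs \<in> {xs \<in> Pre s 0. xs ! c = k}"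
    have "tl (drop c xs) = drop (Suc c) xs" by (simp add: tl_drop drop_Suc)
    then show "(\<lambda>(a,b). a @ tl (rev b)) (take (Suc c) xs, rev (drop c xs)) = xs" by simp
  qed
  show "(\<lambda>xs. (take (Suc c) xs, rev (drop c xs))) ` {xs \<in> Pre s 0. xs ! c = k} \<subseteq> Pre c k \<times> Pre (s - c) k"
  proof
    fix y assume "y \<in> (\<lambda>xs. (take (Suc c) xs, rev (drop c xs))) ` {xs \<in> Pre s 0. xs ! c = k}"
    then obtain xs where xs: "xs \<in> Pre s 0" and k: "k = xs ! c" and y: "y = (take (Suc c) xs, rev (drop c xs))"
      by blast
    have len: "length xs = Suc s" and sx: "successively adj xs" and h: "hd xs = 0" and l: "last xs = 0"
      using xs by (auto simp: Pre_def)
    have lt: "c < length xs" using len cs by simp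
    have "last (take (Suc c) xs) = xs ! c"
      using lt by (simp add: take_Suc_conv_app_nth)
    then have P1: "take (Suc c) xs \<in> Pre c (xs ! c)"
      using len cs sx h unfolding Pre_def by (auto simp: succ_take min_def)
    have "hd (drop c xs) = xs ! c" using lt by (simp add: hd_drop_conv_nth)
    moreover have "last (drop c xs) = 0" using lt l by simp
    moreover have "drop c xs \<noteq> []" using lt by simp
    moreover have "successively adj (rev (drop c xs))" using succ_rev_adj[OF succ_drop[OF sx]] .
    ultimately have P2: "rev (drop c xs) \<in> Pre (s - c) (xs ! c)"
      using len cs unfolding Pre_def by (simp add: hd_rev last_rev del: successively_rev)
    show "y \<in> Pre c k \<times> Pre (s - c) k" using P1 P2 y k by simp
  qed
  show "\<forall>ab\<in>Pre c k \<times> Pre (s - c) k. (\<lambda>xs. (take (Suc c) xs, rev (drop c xs))) ((\<lambda>(a,b). a @ tl (rev b)) ab) = ab"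
  proof
    fix ab assume ab: "ab \<in> Pre c k \<times> Pre (s - c) k"
    obtain a b where [simp]: "ab = (a,b)" by (cases ab)
    have a: "a \<in> Pre c k" and b: "b \<in> Pre (s - c) k" using ab by auto
    have la: "length a = Suc c" and lasta: "last a = k" using a by (auto simp: Pre_def)
    have bne: "b \<noteq> []" and lastb: "last b = k" using b by (auto simp: Pre_def)
    have rb: "rev b = k # tl (rev b)" using bne lastb
      by (metis hd_rev list.collapse Nil_is_rev_conv)
    have t: "take (Suc c) (a @ tl (rev b)) = a" using la by simp
    have ane: "a \<noteq> []" using la by auto
    have ab: "a = butlast a @ [k]" using append_butlast_last_id[OF ane] lasta by simp
    have lba: "length (butlast a) = c" using la by simp
    have "drop (length (butlast a)) (butlast a @ [k]) = [k]" by simp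
    then have "drop c a = [k]" using ab lba by metis
    then have "drop c (a @ tl (rev b)) = k # tl (rev b)" using la by simp
    also have "\<dots> = rev b" by (rule rb[symmetric])
    finally have "drop c (a @ tl (rev b)) = rev b" .
    then show "(\<lambda>xs. (take (Suc c) xs, rev (drop c xs))) ((\<lambda>(a,b). a @ tl (rev b)) ab) = ab"
      using t by simp
  qed
  show "(\<lambda>(a,b). a @ tl (rev b)) ` (Pre c k \<times> Pre (s - c) k) \<subseteq> {xs \<in> Pre s 0. xs ! c = k}"
  proof
    fix y assume "y \<in> (\<lambda>(a,b). a @ tl (rev b)) ` (Pre c k \<times> Pre (s - c) k)"
    then obtain a b where a: "a \<in> Pre c k" and b: "b \<in> Pre (s - c) k" and y: "y = a @ tl (rev b)"
      by force
    have la: "length a = Suc c" and lasta: "last a = k" and sa: "successively adj a" and ha: "hd a = 0"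
      using a by (auto simp: Pre_def)
    have lb: "length b = Suc (s - c)" and lastb: "last b = k" and sb: "successively adj b" and hb: "hd b = 0"
      using b by (auto simp: Pre_def)
    have bne: "b \<noteq> []" using lb by auto
    have rb: "rev b = k # tl (rev b)" using bne lastb
      by (metis hd_rev list.collapse Nil_is_rev_conv)
    define t where "t = tl (rev b)"
    have rbt: "rev b = k # t" using rb unfolding t_def .
    have srb: "successively adj (k # t)" using succ_rev_adj[OF sb] rb unfolding t_def by metis
    have ane: "a \<noteq> []" using la by auto
    have "successively adj (a @ t)"
      using sa srb ane lasta by (auto simp: successively_append_iff successively_Cons)
    moreover have "length (a @ t) = Suc s" using la lb cs unfolding t_def by simp
    moreover have "hd (a @ t) = 0" using ha ane by simp
    moreover have "last (a @ t) = 0"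
    proof (cases "t = []")
      case True
      then have "rev b = [k]" using rbt by simp
      then have "b = [k]" by (metis rev_singleton_conv)
      then have "k = 0" using hb by simp
      then show ?thesis using True lasta by simp
    next
      case False
      have "last t = last (k # t)" using False by simp
      also have "\<dots> = last (rev b)" using rb unfolding t_def by metis
      also have "\<dots> = 0" using hb bne by (simp add: last_rev)
      finally show ?thesis using False by simp
    qed
    moreover have "(a @ t) ! c = k" using la lasta ane by (simp add: nth_append last_conv_nth)
    ultimately show "y \<in> {xs \<in> Pre s 0. xs ! c = k}"
      unfolding Pre_def t_def y by simp
  qed
qed

lemma split_card: "c \<le> s \<Longrightarrow> card {xs \<in> Pre s 0. xs ! c = k} = p c k * p (s - c) k"
  using bij_betw_same_card[OF split_bij] by (simp add: p_def card_cartesian_product)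

lemma sum_fibers:
  assumes cs: "c \<le> s"
  shows "(\<Sum>xs\<in>Pre s 0. w (xs ! c)) = (\<Sum>k\<le>s. w k * (p c k * p (s - c) k))"
proof -
  have img: "(\<lambda>xs. xs ! c) ` Pre s 0 \<subseteq> {..s}"
  proof
    fix y assume "y \<in> (\<lambda>xs. xs ! c) ` Pre s 0"
    then obtain xs where xs: "xs \<in> Pre s 0" and y: "y = xs ! c" by blast
    show "y \<in> {..s}" using Pre_nth_le[OF xs cs] cs y by simp
  qed
  have "(\<Sum>xs\<in>Pre s 0. w (xs ! c)) = (\<Sum>k\<le>s. \<Sum>xs\<in>{xs \<in> Pre s 0. xs ! c = k}. w (xs ! c))"
    by (rule sum.group[OF finite_Pre _ img, symmetric]) simp
  also have "\<dots> = (\<Sum>k\<le>s. \<Sum>xs\<in>{xs \<in> Pre s 0. xs ! c = k}. w k)"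
    by (intro sum.cong refl) auto
  also have "\<dots> = (\<Sum>k\<le>s. w k * (p c k * p (s - c) k))"
    using split_card[OF cs] by (simp add: mult.commute)
  finally show ?thesis .
qed

lemma f_formula: "f s = (\<Sum>c<Suc s. \<Sum>k\<le>s. k * (p c k * p (s - c) k))"
proof -
  have "f s = (\<Sum>c<Suc s. \<Sum>xs\<in>Pre s 0. xs ! c)"
    unfolding f_paths by (rule sum.swap)
  also have "\<dots> = (\<Sum>c<Suc s. \<Sum>k\<le>s. k * (p c k * p (s - c) k))"
    by (intro sum.cong refl sum_fibers[where w = "\<lambda>k. k"]) simp
  finally show ?thesis .
qed

lemma g_formula: "g s = (\<Sum>c<Suc s. \<Sum>k\<le>s. (\<Sum>j<k. j) * (p c k * p (s - c) k))"
proof -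
  have "g s = (\<Sum>c<Suc s. \<Sum>xs\<in>Pre s 0. \<Sum>j<xs ! c. j)"
    unfolding g_paths by (rule sum.swap)
  also have "\<dots> = (\<Sum>c<Suc s. \<Sum>k\<le>s. (\<Sum>j<k. j) * (p c k * p (s - c) k))"
    by (intro sum.cong refl sum_fibers[where w = "\<lambda>k. \<Sum>j<k. j"]) simp
  finally show ?thesis .
qed




lemma p_Suc_0: "p (Suc n) 0 = p n 0 + p n 1"
proof -
  have "{0 - 1..0 + 1} = {0::nat, 1}" by auto
  then show ?thesis by (simp add: p_Suc)
qed

lemma p_Suc_Suc: "p (Suc n) (Suc j) = p n j + p n (Suc j) + p n (Suc (Suc j))"
proof -
  have "{Suc j - 1..Suc j + 1} = {j, Suc j, Suc (Suc j)}" by auto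
  then show ?thesis by (simp add: p_Suc)
qed

definition Dp :: "real fps" where "Dp = 1 - 2 * fps_X - 3 * fps_X ^ 2"
definition Sq :: "real fps" where "Sq = fps_radical (\<lambda>k x. sqrt x) 2 Dp"
definition Uf :: "real fps" where "Uf = fps_const (1/2) * (1 - fps_X - Sq)"
definition Mf :: "real fps" where "Mf = fps_shift 2 Uf"

lemma Dp0: "Dp $ 0 = 1" by (simp add: Dp_def)
lemma Dp1: "Dp $ Suc 0 = -2" by (simp add: Dp_def)

lemma Sq_sq: "Sq ^ 2 = Dp"
proof -
  have "(sqrt (Dp $ 0)) ^ Suc 1 = Dp $ 0" by (simp add: Dp0)
  then have "fps_radical (\<lambda>k x. sqrt x) (Suc 1) Dp ^ Suc 1 = Dp"
    using power_radical[of Dp "\<lambda>k x. sqrt x" 1] Dp0 by simp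
  then show ?thesis unfolding Sq_def by (simp add: numeral_2_eq_2)
qed

lemma Sq0: "Sq $ 0 = 1" by (simp add: Sq_def Dp0)

lemma Sq1: "Sq $ Suc 0 = -1"
proof -
  have "(Sq * Sq) $ Suc 0 = Dp $ Suc 0" using Sq_sq by (simp add: power2_eq_square)
  moreover have "(Sq * Sq) $ Suc 0 = (\<Sum>i=0..Suc 0. Sq $ i * Sq $ (Suc 0 - i))" by (rule fps_mult_nth)
  moreover have "(\<Sum>i=0..Suc 0. Sq $ i * Sq $ (Suc 0 - i)) = Sq $ 0 * Sq $ Suc 0 + Sq $ Suc 0 * Sq $ 0"
    by simp
  ultimately have "Sq $ 0 * Sq $ Suc 0 + Sq $ Suc 0 * Sq $ 0 = -2" using Dp1 by linarith
  then have "1 * Sq $ Suc 0 + Sq $ Suc 0 * 1 = -2" unfolding Sq0 .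
  then show ?thesis by linarith
qed

lemma Uf0: "Uf $ 0 = 0" by (simp add: Uf_def Sq0)
lemma Uf1: "Uf $ Suc 0 = 0" by (simp add: Uf_def Sq1)

lemma Uf_eq: "Uf = fps_X ^ 2 * Mf"
proof (rule fps_ext)
  fix n
  show "Uf $ n = (fps_X ^ 2 * Mf) $ n"
    using Uf0 Uf1 by (cases n; cases "n - 1") (auto simp: fps_X_power_mult_nth Mf_def)
qed

lemma Sq_eq: "Sq = 1 - fps_X - 2 * Uf"
proof -
  have h: "2 * fps_const (1/2::real) = 1"
    by (simp add: fps_numeral_fps_const fps_const_mult)
  have "2 * Uf = 1 - fps_X - Sq" unfolding Uf_def by (simp add: mult.assoc[symmetric] h)
  then show ?thesis by (simp add: algebra_simps)
qed

lemma Uf_quad: "Uf = fps_X ^ 2 + fps_X * Uf + Uf ^ 2"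
proof -
  have "4 * (fps_X ^ 2 + fps_X * Uf + Uf ^ 2 - Uf) = (1 - fps_X - 2 * Uf) ^ 2 - Dp"
    unfolding Dp_def by (simp add: algebra_simps power2_eq_square)
  also have "\<dots> = 0" using Sq_sq Sq_eq by simp
  finally have "4 * (fps_X ^ 2 + fps_X * Uf + Uf ^ 2 - Uf) = (0 :: real fps)" .
  moreover have "(4 :: real fps) \<noteq> 0" by simp
  ultimately have "fps_X ^ 2 + fps_X * Uf + Uf ^ 2 - Uf = 0" by (simp only: mult_eq_0_iff) simp
  then show ?thesis by (metis right_minus_eq)
qed

lemma Mf_quad: "Mf = 1 + fps_X * Mf + fps_X ^ 2 * Mf ^ 2"
proof -
  have "fps_X ^ 2 * (Mf - (1 + fps_X * Mf + fps_X ^ 2 * Mf ^ 2)) = Uf - (fps_X ^ 2 + fps_X * Uf + Uf ^ 2)"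
    unfolding Uf_eq by (simp add: algebra_simps power2_eq_square)
  also have "\<dots> = 0" using Uf_quad by simp
  finally show ?thesis by simp
qed

lemma Mf0: "Mf $ 0 = 1"
proof -
  have "Mf $ 0 = (1 + fps_X * Mf + fps_X ^ 2 * Mf ^ 2) $ 0" using Mf_quad by metis
  then show ?thesis by simp
qed

definition Q :: "nat \<Rightarrow> real fps" where "Q k = fps_X ^ k * Mf ^ Suc k"

lemma Q_rec0: "Q 0 = 1 + fps_X * (Q 0 + Q 1)"
proof -
  have "1 + fps_X * (Q 0 + Q 1) = 1 + fps_X * Mf + fps_X ^ 2 * Mf ^ 2"
    by (simp add: Q_def algebra_simps power2_eq_square)
  also have "\<dots> = Q 0" using Mf_quad by (simp add: Q_def)
  finally show ?thesis ..
qed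

lemma Q_recS: "Q (Suc j) = fps_X * (Q j + Q (Suc j) + Q (Suc (Suc j)))"
proof -
  have "fps_X * (Q j + Q (Suc j) + Q (Suc (Suc j))) =
        fps_X ^ Suc j * Mf ^ Suc j * (1 + fps_X * Mf + fps_X ^ 2 * Mf ^ 2)"
    by (simp add: Q_def algebra_simps power2_eq_square)
  also have "\<dots> = Q (Suc j)" using Mf_quad by (simp add: Q_def algebra_simps)
  finally show ?thesis ..
qed

lemma X_mult_Suc: "(fps_X * F) $ Suc n = (F :: real fps) $ n"
  by (simp add: fps_X_mult_nth)

lemma p_Q: "real (p n k) = Q k $ n"
proof (induction n arbitrary: k)
  case 0
  show ?case
  proof (cases k)
    case 0 then show ?thesis by (simp add: p_0 Q_def Mf0)
  next
    case (Suc j) then show ?thesis by (simp add: p_0 Q_def)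
  qed
next
  case (Suc n)
  show ?case
  proof (cases k)
    case 0
    have "Q 0 $ Suc n = (Q 0 + Q 1) $ n" by (subst Q_rec0) (simp only: fps_add_nth X_mult_Suc, simp)
    then show ?thesis using Suc.IH 0 by (simp add: p_Suc_0)
  next
    case (Suc j)
    have "Q (Suc j) $ Suc n = (Q j + Q (Suc j) + Q (Suc (Suc j))) $ n"
      by (subst Q_recS) (simp only: X_mult_Suc)
    then show ?thesis using Suc.IH \<open>k = Suc j\<close> by (simp add: p_Suc_Suc)
  qed
qed

lemma L1: "(1 - z) ^ 2 * (\<Sum>k\<le>N. of_nat k * z ^ k) =
   z - of_nat (Suc N) * z ^ Suc N + of_nat N * z ^ Suc (Suc N)" for z :: "'a::comm_ring_1"
proof (induction N)
  case 0 then show ?case by simp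
next
  case (Suc N)
  have "(1 - z) ^ 2 * (\<Sum>k\<le>Suc N. of_nat k * z ^ k) =
        (z - of_nat (Suc N) * z ^ Suc N + of_nat N * z ^ Suc (Suc N)) + (1 - z)^2 * (of_nat (Suc N) * z ^ Suc N)"
    by (simp add: distrib_left Suc.IH)
  also have "\<dots> = z - of_nat (Suc (Suc N)) * z ^ Suc (Suc N) + of_nat (Suc N) * z ^ Suc (Suc (Suc N))"
    by (simp add: algebra_simps power2_eq_square)
  finally show ?case .
qed

lemma L2: "(1 - z) ^ 3 * (\<Sum>k\<le>N. of_nat k * (of_nat k - 1) * z ^ k) =
   2 * z ^ 2 - z ^ Suc N * (of_nat (Suc N) * of_nat N + 2 * (of_nat N + 1) * (1 - of_nat N) * z
      + of_nat N * (of_nat N - 1) * z ^ 2)" for z :: "'a::comm_ring_1"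
proof (induction N)
  case 0 then show ?case by (simp add: algebra_simps power2_eq_square)
next
  case (Suc N)
  have "(1 - z) ^ 3 * (\<Sum>k\<le>Suc N. of_nat k * (of_nat k - 1) * z ^ k) =
     (2 * z ^ 2 - z ^ Suc N * (of_nat (Suc N) * of_nat N + 2 * (of_nat N + 1) * (1 - of_nat N) * z
      + of_nat N * (of_nat N - 1) * z ^ 2)) + (1 - z)^3 * (of_nat (Suc N) * (of_nat (Suc N) - 1) * z ^ Suc N)"
    by (simp add: distrib_left Suc.IH)
  also have "\<dots> = 2 * z ^ 2 - z ^ Suc (Suc N) * (of_nat (Suc (Suc N)) * of_nat (Suc N) + 2 * (of_nat (Suc N) + 1) * (1 - of_nat (Suc N)) * z
      + of_nat (Suc N) * (of_nat (Suc N) - 1) * z ^ 2)"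
    by (simp add: algebra_simps power2_eq_square power3_eq_cube)
  finally show ?case .
qed

definition Yf :: "real fps" where "Yf = fps_X ^ 2 * Mf ^ 2"

lemma Yf_pow: "Yf ^ k = fps_X ^ (2 * k) * Mf ^ (2 * k)"
  by (simp add: Yf_def power_mult_distrib power_mult)

lemma QQ: "Q k * Q k = Mf ^ 2 * Yf ^ k"
proof -
  have a: "(fps_X ^ 2 :: real fps) ^ k = (fps_X ^ k) ^ 2" by (metis power_mult mult.commute)
  have b: "(Mf ^ 2) ^ k = (Mf ^ k) ^ 2" by (metis power_mult mult.commute)
  have "Yf ^ k = (fps_X ^ k) ^ 2 * (Mf ^ k) ^ 2" unfolding Yf_def power_mult_distrib a b ..
  then show ?thesis by (simp add: Q_def power2_eq_square algebra_simps)
qed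

lemma vanish: "i < 2 * k \<Longrightarrow> (F * Yf ^ k) $ i = 0"
proof -
  assume i: "i < 2 * k"
  have e: "F * Yf ^ k = fps_X ^ (2 * k) * (F * Mf ^ (2 * k))" by (metis Yf_pow mult.assoc mult.commute)
  show ?thesis unfolding e using i by (simp only: fps_X_power_mult_nth) simp
qed

lemma prefix_mult:
  assumes "\<And>j. j \<le> n \<Longrightarrow> F1 $ j = F2 $ j"
  shows "(F3 * F1) $ n = (F3 * F2) $ n"
  unfolding fps_mult_nth using assms by (intro sum.cong refl) auto

lemma weighted_coeff:
  fixes w :: "nat \<Rightarrow> real"
  assumes "i \<le> N"
  shows "(Mf ^ 2 * (\<Sum>k\<le>N. fps_const (w k) * Yf ^ k)) $ i = (\<Sum>k\<le>i. w k * (Q k * Q k) $ i)"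
proof -
  have "(Mf ^ 2 * (\<Sum>k\<le>N. fps_const (w k) * Yf ^ k)) $ i = (\<Sum>k\<le>N. w k * (Mf ^ 2 * Yf ^ k) $ i)"
    by (simp add: sum_distrib_left fps_sum_nth algebra_simps)
  also have "\<dots> = (\<Sum>k\<le>i. w k * (Mf ^ 2 * Yf ^ k) $ i)"
  proof (rule sum.mono_neutral_right)
    show "\<forall>k\<in>{..N} - {..i}. w k * (Mf ^ 2 * Yf ^ k) $ i = 0" using vanish by auto
  qed (use assms in auto)
  finally show ?thesis by (simp add: QQ)
qed

definition Ff :: "real fps" where "Ff = Abs_fps (\<lambda>s. real (f s))"
definition Gf :: "real fps" where "Gf = Abs_fps (\<lambda>s. real (g s))"

lemma QQ_nth: "(Q k * Q k) $ s = (\<Sum>c\<le>s. real (p c k) * real (p (s - c) k))"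
  by (simp only: fps_mult_nth atLeast0AtMost p_Q)

lemma general_coeff:
  fixes w :: "nat \<Rightarrow> real"
  shows "(\<Sum>c<Suc s. \<Sum>k\<le>s. w k * (real (p c k) * real (p (s - c) k))) = (\<Sum>k\<le>s. w k * (Q k * Q k) $ s)"
proof -
  have "(\<Sum>c<Suc s. \<Sum>k\<le>s. w k * (real (p c k) * real (p (s - c) k))) =
        (\<Sum>c\<le>s. \<Sum>k\<le>s. w k * (real (p c k) * real (p (s - c) k)))"
    by (simp only: lessThan_Suc_atMost)
  also have "\<dots> = (\<Sum>k\<le>s. \<Sum>c\<le>s. w k * (real (p c k) * real (p (s - c) k)))"
    by (rule sum.swap)
  also have "\<dots> = (\<Sum>k\<le>s. w k * (Q k * Q k) $ s)"
    by (simp only: QQ_nth sum_distrib_left)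
  finally show ?thesis .
qed

lemma Ff_coeff: "i \<le> N \<Longrightarrow> Ff $ i = (Mf ^ 2 * (\<Sum>k\<le>N. fps_const (real k) * Yf ^ k)) $ i"
proof -
  assume iN: "i \<le> N"
  have "Ff $ i = (\<Sum>c<Suc i. \<Sum>k\<le>i. real k * (real (p c k) * real (p (i - c) k)))"
    by (simp add: Ff_def f_formula)
  also have "\<dots> = (\<Sum>k\<le>i. real k * (Q k * Q k) $ i)" by (rule general_coeff)
  also have "\<dots> = (Mf ^ 2 * (\<Sum>k\<le>N. fps_const (real k) * Yf ^ k)) $ i"
    by (rule weighted_coeff[OF iN, symmetric])
  finally show ?thesis .
qed

lemma Gf_coeff: "i \<le> N \<Longrightarrow> Gf $ i = (Mf ^ 2 * (\<Sum>k\<le>N. fps_const (real (\<Sum>j<k. j)) * Yf ^ k)) $ i"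
proof -
  assume iN: "i \<le> N"
  have "Gf $ i = (\<Sum>c<Suc i. \<Sum>k\<le>i. real (\<Sum>j<k. j) * (real (p c k) * real (p (i - c) k)))"
    by (simp add: Gf_def g_formula)
  also have "\<dots> = (\<Sum>k\<le>i. real (\<Sum>j<k. j) * (Q k * Q k) $ i)" by (rule general_coeff)
  also have "\<dots> = (Mf ^ 2 * (\<Sum>k\<le>N. fps_const (real (\<Sum>j<k. j)) * Yf ^ k)) $ i"
    by (rule weighted_coeff[OF iN, symmetric])
  finally show ?thesis .
qed

lemma fps_of_nat_const: "(of_nat k :: real fps) = fps_const (real k)"
  by (simp add: fps_of_nat)

lemma Ff_eq: "(1 - Yf) ^ 2 * Ff = Mf ^ 2 * Yf"
proof (rule fps_ext)
  fix n
  let ?S = "\<Sum>k\<le>n. fps_const (real k) * Yf ^ k"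
  have "((1 - Yf) ^ 2 * Ff) $ n = ((1 - Yf) ^ 2 * (Mf ^ 2 * ?S)) $ n"
    by (rule prefix_mult) (simp add: Ff_coeff)
  also have "(1 - Yf) ^ 2 * (Mf ^ 2 * ?S) = Mf ^ 2 * ((1 - Yf) ^ 2 * (\<Sum>k\<le>n. of_nat k * Yf ^ k))"
    by (simp add: fps_of_nat_const algebra_simps)
  also have "\<dots> = Mf ^ 2 * Yf - of_nat (Suc n) * (Mf ^ 2 * Yf ^ Suc n) + of_nat n * (Mf ^ 2 * Yf ^ Suc (Suc n))"
    by (simp add: L1 algebra_simps)
  also have "\<dots> $ n = (Mf ^ 2 * Yf) $ n"
  proof -
    have v1: "(Mf ^ 2 * Yf ^ Suc n) $ n = 0" by (rule vanish) simp
    have v2: "(Mf ^ 2 * Yf ^ Suc (Suc n)) $ n = 0" by (rule vanish) simp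
    show ?thesis by (simp only: fps_of_nat_const fps_sub_nth fps_add_nth mult.assoc fps_mult_left_const_nth v1 v2)
  qed
  finally show "((1 - Yf) ^ 2 * Ff) $ n = (Mf ^ 2 * Yf) $ n" .
qed

lemma gauss2: "2 * real (\<Sum>j<k. j) = real k * (real k - 1)"
  by (induction k) (simp_all add: algebra_simps)

lemma Gf_eq: "(1 - Yf) ^ 3 * Gf = Mf ^ 2 * Yf ^ 2"
proof (rule fps_ext)
  fix n
  let ?S = "\<Sum>k\<le>n. fps_const (real (\<Sum>j<k. j)) * Yf ^ k"
  let ?P = "of_nat (Suc n) * of_nat n + 2 * (of_nat n + 1) * (1 - of_nat n) * Yf + of_nat n * (of_nat n - 1) * Yf ^ 2"
  have step1: "((1 - Yf) ^ 3 * Gf) $ n = ((1 - Yf) ^ 3 * (Mf ^ 2 * ?S)) $ n"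
    by (rule prefix_mult) (simp add: Gf_coeff)
  have S2: "2 * ?S = (\<Sum>k\<le>n. of_nat k * (of_nat k - 1) * Yf ^ k)"
  proof -
    have "2 * ?S = (\<Sum>k\<le>n. (2 * fps_const (real (\<Sum>j<k. j))) * Yf ^ k)"
      by (simp only: sum_distrib_left mult.assoc)
    also have "\<dots> = (\<Sum>k\<le>n. of_nat k * (of_nat k - 1) * Yf ^ k)"
    proof (rule sum.cong[OF refl])
      fix k
      have "(2 :: real fps) * fps_const (real (\<Sum>j<k. j)) = fps_const (2 * real (\<Sum>j<k. j))"
        by (simp only: fps_numeral_fps_const fps_const_mult)
      also have "\<dots> = fps_const (real k * (real k - 1))" by (simp only: gauss2)
      also have "\<dots> = fps_const (real k) * (fps_const (real k) - fps_const 1)"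
        by (simp only: fps_const_mult fps_const_sub)
      also have "\<dots> = of_nat k * (of_nat k - 1)" by (simp only: fps_of_nat_const fps_const_1_eq_1)
      finally show "2 * fps_const (real (\<Sum>j<k. j)) * Yf ^ k = of_nat k * (of_nat k - 1) * Yf ^ k" by simp
    qed
    finally show ?thesis .
  qed
  have "2 * ((1 - Yf) ^ 3 * (Mf ^ 2 * ?S)) = Mf ^ 2 * ((1 - Yf) ^ 3 * (2 * ?S))"
    by (simp only: mult.assoc mult.left_commute)
  also have "\<dots> = Mf ^ 2 * (2 * Yf ^ 2 - Yf ^ Suc n * ?P)" by (simp only: S2 L2)
  also have "\<dots> = 2 * (Mf ^ 2 * Yf ^ 2) - (Mf ^ 2 * ?P) * Yf ^ Suc n" by (simp add: algebra_simps)
  finally have e: "2 * ((1 - Yf) ^ 3 * (Mf ^ 2 * ?S)) = 2 * (Mf ^ 2 * Yf ^ 2) - (Mf ^ 2 * ?P) * Yf ^ Suc n" .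
  have v: "((Mf ^ 2 * ?P) * Yf ^ Suc n) $ n = 0" by (rule vanish) simp
  have "2 * ((1 - Yf) ^ 3 * (Mf ^ 2 * ?S)) $ n = 2 * (Mf ^ 2 * Yf ^ 2) $ n"
    using arg_cong[OF e, of "\<lambda>F. F $ n"] v by (simp add: fps_numeral_fps_const)
  then show "((1 - Yf) ^ 3 * Gf) $ n = (Mf ^ 2 * Yf ^ 2) $ n" using step1 by simp
qed




lemma p_le: "p n k \<le> 3 ^ n"
proof (induction n arbitrary: k)
  case 0 then show ?case by (simp add: p_0)
next
  case (Suc n)
  have "p (Suc n) k = (\<Sum>k'\<in>{k-1..k+1}. p n k')" by (rule p_Suc)
  also have "\<dots> \<le> card {k-1..k+1} * 3 ^ n" using sum_bounded_above[of "{k-1..k+1}" "p n" "3^n"] Suc by simp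
  also have "card {k-1..k+1} \<le> 3" by simp
  then have "card {k-1..k+1} * 3 ^ n \<le> 3 * 3 ^ n" by simp
  finally show ?case by simp
qed

lemma pp_le: "c \<le> s \<Longrightarrow> p c k * p (s - c) k \<le> 3 ^ s"
proof -
  assume "c \<le> s"
  have "p c k * p (s - c) k \<le> 3 ^ c * 3 ^ (s - c)" by (intro mult_le_mono p_le)
  also have "\<dots> = 3 ^ s" using \<open>c \<le> s\<close> by (simp flip: power_add)
  finally show ?thesis .
qed

lemma f_le: "f s \<le> (s + 1) ^ 4 * 3 ^ s"
proof -
  have "f s = (\<Sum>c<Suc s. \<Sum>k\<le>s. k * (p c k * p (s - c) k))" by (rule f_formula)
  also have "\<dots> \<le> (\<Sum>c<Suc s. \<Sum>k\<le>s. s * 3 ^ s)"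
    by (intro sum_mono mult_le_mono pp_le) auto
  also have "\<dots> = (s + 1) * (s + 1) * s * 3 ^ s" by (simp add: algebra_simps)
  also have "\<dots> \<le> (s + 1) ^ 4 * 3 ^ s"
  proof (intro mult_le_mono1)
    have "(s + 1) * (s + 1) * s \<le> (s + 1) * (s + 1) * ((s + 1) * (s + 1))"
      by (intro mult_le_mono2) simp
    then show "(s + 1) * (s + 1) * s \<le> (s + 1) ^ 4" by (simp only: power4_eq_xxxx mult.assoc)
  qed
  finally show ?thesis .
qed

lemma sum_lt_le: "(\<Sum>j<k. j) \<le> k * (k::nat)"
proof -
  show ?thesis using sum_bounded_above[of "{..<k}" "\<lambda>j. j" k] by simp
qed

lemma g_le: "g s \<le> (s + 1) ^ 4 * 3 ^ s"
proof -
  have "g s = (\<Sum>c<Suc s. \<Sum>k\<le>s. (\<Sum>j<k. j) * (p c k * p (s - c) k))" by (rule g_formula)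
  also have "\<dots> \<le> (\<Sum>c<Suc s. \<Sum>k\<le>s. (s * s) * 3 ^ s)"
  proof (intro sum_mono mult_le_mono pp_le)
    fix k assume "k \<in> {..s}"
    then have "k * k \<le> s * s" by (simp add: mult_le_mono)
    then show "(\<Sum>j<k. j) \<le> s * s" using sum_lt_le[of k] by linarith
  qed auto
  also have "\<dots> = (s + 1) * (s + 1) * (s * s) * 3 ^ s" by (simp add: algebra_simps)
  also have "\<dots> \<le> (s + 1) ^ 4 * 3 ^ s"
  proof (intro mult_le_mono1)
    have "s * s \<le> (s + 1) * (s + 1)" by (intro mult_le_mono) auto
    then have "(s + 1) * (s + 1) * (s * s) \<le> (s + 1) * (s + 1) * ((s + 1) * (s + 1))"
      by (intro mult_le_mono2)
    then show "(s + 1) * (s + 1) * (s * s) \<le> (s + 1) ^ 4" by (simp only: power4_eq_xxxx mult.assoc)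
  qed
  finally show ?thesis .
qed

definition G0 :: "real fps" where "G0 = Abs_fps (\<lambda>n. 3 ^ n)"

lemma G0_rad: "fps_conv_radius G0 \<ge> ereal (1/3)"
  unfolding fps_conv_radius_def
proof (rule conv_radius_geI_ex')
  fix r :: real assume r: "0 < r" "ereal r < ereal (1/3)"
  have "summable (\<lambda>n. (3 * r) ^ n)" using r by (intro summable_geometric) auto
  then show "summable (\<lambda>n. G0 $ n * of_real r ^ n)" by (simp add: G0_def power_mult_distrib)
qed

definition G4 :: "real fps" where "G4 = fps_deriv (fps_deriv (fps_deriv (fps_deriv G0)))"

lemma G4_rad: "fps_conv_radius G4 \<ge> ereal (1/3)"
  unfolding G4_def by (meson G0_rad fps_conv_radius_deriv order_trans)

lemma G4_ge: "real ((n + 1) ^ 4 * 3 ^ n) \<le> G4 $ n"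
proof -
  let ?a = "n + 1" and ?b = "n + 1 + 1" and ?c = "n + 1 + 1 + 1" and ?d = "n + 1 + 1 + 1 + 1"
  have e: "G4 $ n = of_nat ?a * (of_nat ?b * (of_nat ?c * (of_nat ?d * 3 ^ ?d)))"
    by (simp only: G4_def fps_deriv_nth G0_def fps_nth_Abs_fps)
  have "(n + 1) ^ 4 * 3 ^ n \<le> ?a * (?b * (?c * (?d * 3 ^ ?d)))"
  proof -
    have "(n + 1) ^ 4 * 3 ^ n = ?a * (?a * (?a * (?a * 3 ^ n)))" by (simp only: power4_eq_xxxx mult.assoc)
    also have "\<dots> \<le> ?a * (?b * (?c * (?d * 3 ^ ?d)))"
      by (intro mult_le_mono order.refl power_increasing) auto
    finally show ?thesis .
  qed
  then have "real ((n + 1) ^ 4 * 3 ^ n) \<le> real (?a * (?b * (?c * (?d * 3 ^ ?d))))"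
    by (simp only: of_nat_le_iff)
  also have "\<dots> = G4 $ n" unfolding e by (simp only: of_nat_mult of_nat_power of_nat_numeral)
  finally show ?thesis .
qed

lemma rad_bound:
  fixes a :: "nat \<Rightarrow> real"
  assumes "\<And>n. \<bar>a n\<bar> \<le> real ((n + 1) ^ 4 * 3 ^ n)"
  shows "conv_radius a \<ge> ereal (1/3)"
proof (rule conv_radius_geI_ex')
  fix r :: real assume r: "0 < r" "ereal r < ereal (1/3)"
  have "norm r < fps_conv_radius G4" using less_le_trans[OF r(2) G4_rad] r(1) by simp
  then have sg: "summable (\<lambda>n. G4 $ n * r ^ n)" by (rule summable_fps)
  show "summable (\<lambda>n. a n * of_real r ^ n)"
  proof (rule summable_comparison_test'[OF sg])
    fix n
    have "norm (a n * of_real r ^ n) = \<bar>a n\<bar> * r ^ n" using r by (simp add: abs_mult)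
    also have "\<dots> \<le> G4 $ n * r ^ n"
      using assms[of n] G4_ge[of n] r by (intro mult_right_mono) auto
    finally show "norm (a n * of_real r ^ n) \<le> G4 $ n * r ^ n" .
  qed
qed

lemma Mf_nth: "Mf $ n = real (p n 0)"
  using p_Q[of n 0] by (simp add: Q_def)

lemma Mf_rad: "fps_conv_radius Mf \<ge> ereal (1/3)"
  unfolding fps_conv_radius_def
proof (rule rad_bound)
  fix n
  have "p n 0 \<le> (n + 1) ^ 4 * 3 ^ n" using p_le[of n 0] by (metis le_trans mult_le_mono1 mult_1 one_le_power le_add2)
  then show "\<bar>Mf $ n\<bar> \<le> real ((n + 1) ^ 4 * 3 ^ n)" by (simp only: Mf_nth abs_of_nat of_nat_le_iff)
qed

lemma Ff_rad: "fps_conv_radius Ff \<ge> ereal (1/3)"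
  unfolding fps_conv_radius_def
  by (rule rad_bound) (unfold Ff_def fps_nth_Abs_fps abs_of_nat of_nat_le_iff, rule f_le)

lemma Gf_rad: "fps_conv_radius Gf \<ge> ereal (1/3)"
  unfolding fps_conv_radius_def
  by (rule rad_bound) (unfold Gf_def fps_nth_Abs_fps abs_of_nat of_nat_le_iff, rule g_le)




definition good :: "real fps \<Rightarrow> bool" where "good F \<longleftrightarrow> ereal (1/3) \<le> fps_conv_radius F"

lemma good_add: "good F \<Longrightarrow> good G \<Longrightarrow> good (F + G)"
  unfolding good_def using fps_conv_radius_add[of F G] by (meson min.boundedI order_trans)
lemma good_diff: "good F \<Longrightarrow> good G \<Longrightarrow> good (F - G)"
  unfolding good_def using fps_conv_radius_diff[of F G] by (meson min.boundedI order_trans)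
lemma good_mult: "good F \<Longrightarrow> good G \<Longrightarrow> good (F * G)"
  unfolding good_def using fps_conv_radius_mult[of F G] by (meson min.boundedI order_trans)
lemma good_power: "good F \<Longrightarrow> good (F ^ n)"
  unfolding good_def using fps_conv_radius_power[of F n] by (meson order_trans)
lemma good_1: "good 1" unfolding good_def by simp
lemma good_X: "good fps_X" unfolding good_def by simp
lemma good_Mf: "good Mf" unfolding good_def by (rule Mf_rad)
lemma good_Ff: "good Ff" unfolding good_def by (rule Ff_rad)
lemma good_Gf: "good Gf" unfolding good_def by (rule Gf_rad)
lemma good_Yf: "good Yf" unfolding Yf_def by (intro good_mult good_power good_X good_Mf)

lemma good_norm: "good F \<Longrightarrow> \<bar>t::real\<bar> < 1/3 \<Longrightarrow> norm t < fps_conv_radius F"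
proof -
  assume g: "good F" and t: "\<bar>t\<bar> < 1/3"
  have "ereal (norm t) < ereal (1/3)" using t by simp
  then show ?thesis using g unfolding good_def by (rule less_le_trans)
qed

lemma ev_add: "good F \<Longrightarrow> good G \<Longrightarrow> \<bar>t\<bar> < 1/3 \<Longrightarrow> eval_fps (F + G) t = eval_fps F t + eval_fps G t"
  by (intro eval_fps_add good_norm)
lemma ev_diff: "good F \<Longrightarrow> good G \<Longrightarrow> \<bar>t\<bar> < 1/3 \<Longrightarrow> eval_fps (F - G) t = eval_fps F t - eval_fps G t"
  by (intro eval_fps_diff good_norm)
lemma ev_mult: "good F \<Longrightarrow> good G \<Longrightarrow> \<bar>t\<bar> < 1/3 \<Longrightarrow> eval_fps (F * G) t = eval_fps F t * eval_fps G t"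
  by (intro eval_fps_mult good_norm)
lemma ev_power: "good F \<Longrightarrow> \<bar>t\<bar> < 1/3 \<Longrightarrow> eval_fps (F ^ n) t = eval_fps F t ^ n"
  by (intro eval_fps_power good_norm)

lemma ev_Yf: "\<bar>t\<bar> < 1/3 \<Longrightarrow> eval_fps Yf t = t ^ 2 * eval_fps Mf t ^ 2"
proof -
  assume t: "\<bar>t\<bar> < 1/3"
  have "eval_fps Yf t = eval_fps (fps_X ^ 2) t * eval_fps (Mf ^ 2) t"
    unfolding Yf_def by (rule ev_mult[OF good_power[OF good_X] good_power[OF good_Mf] t])
  also have "\<dots> = t ^ 2 * eval_fps Mf t ^ 2"
    using ev_power[OF good_Mf t] by (simp only: eval_fps_X_power)
  finally show ?thesis .
qed

lemma M_quad_eval: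
  assumes t: "\<bar>t\<bar> < 1/3"
  shows "eval_fps Mf t = 1 + t * eval_fps Mf t + t ^ 2 * eval_fps Mf t ^ 2"
proof -
  have g: "good (fps_X * Mf)" "good (fps_X ^ 2 * Mf ^ 2)" "good (fps_X ^ 2)" "good (Mf ^ 2)"
    by (intro good_mult good_power good_X good_Mf)+
  have "eval_fps Mf t = eval_fps (1 + fps_X * Mf + fps_X ^ 2 * Mf ^ 2) t" using Mf_quad by metis
  also have "\<dots> = 1 + t * eval_fps Mf t + t ^ 2 * eval_fps Mf t ^ 2"
    using t g by (simp add: ev_add ev_mult ev_power good_add good_1 good_X good_Mf)
  finally show ?thesis .
qed

definition phi :: "real \<Rightarrow> real" where "phi t = 1 - t - 2 * t ^ 2 * eval_fps Mf t"

lemma phi_sq: "\<bar>t\<bar> < 1/3 \<Longrightarrow> phi t ^ 2 = D t"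
proof -
  assume t: "\<bar>t\<bar> < 1/3"
  define m where "m = eval_fps Mf t"
  have q: "m = 1 + t * m + t ^ 2 * m ^ 2" using M_quad_eval[OF t] unfolding m_def .
  have "phi t ^ 2 - D t = 4 * t ^ 2 * (1 + t * m + t ^ 2 * m ^ 2 - m)"
    unfolding phi_def D_def m_def[symmetric] by (simp add: algebra_simps power2_eq_square)
  also have "\<dots> = 0" using q by simp
  finally show ?thesis by simp
qed

lemma D_pos: "\<bar>t\<bar> < 1/3 \<Longrightarrow> D t > 0"
proof -
  assume t: "\<bar>t\<bar> < 1/3"
  have "D t = (1 - 3 * t) * (1 + t)" unfolding D_def by (simp add: algebra_simps power2_eq_square)
  moreover have "1 - 3 * t > 0" "1 + t > 0" using t by auto
  ultimately show ?thesis by simp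
qed

lemma phi_cont: "a \<le> b \<Longrightarrow> \<bar>a\<bar> < 1/3 \<Longrightarrow> \<bar>b\<bar> < 1/3 \<Longrightarrow> continuous_on {a..b} phi"
proof -
  assume ab: "a \<le> b" "\<bar>a\<bar> < 1/3" "\<bar>b\<bar> < 1/3"
  have sub: "{a..b} \<subseteq> eball 0 (fps_conv_radius Mf)"
  proof
    fix t assume "t \<in> {a..b}"
    then have "\<bar>t\<bar> < 1/3" using ab by auto
    then have "norm t < fps_conv_radius Mf" using good_norm good_Mf by blast
    then show "t \<in> eball 0 (fps_conv_radius Mf)" by (simp add: dist_norm)
  qed
  have "continuous_on {a..b} (eval_fps Mf)"
    using continuous_on_subset[OF continuous_on_eval_fps sub] .
  then show ?thesis unfolding phi_def by (intro continuous_intros) (use sub in auto)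
qed

lemma phi_pos:
  assumes x: "\<bar>x\<bar> < 1/3" shows "phi x > 0"
proof (rule ccontr)
  assume neg: "\<not> phi x > 0"
  have p0: "phi 0 = 1" by (simp add: phi_def)
  obtain z where z: "\<bar>z\<bar> < 1/3" "phi z = 0"
  proof (cases "x \<ge> 0")
    case True
    have "\<exists>z. 0 \<le> z \<and> z \<le> x \<and> phi z = 0"
      by (rule IVT2') (use neg p0 True x phi_cont[of 0 x] in auto)
    then show ?thesis using that x by force
  next
    case False
    have "\<exists>z. x \<le> z \<and> z \<le> 0 \<and> phi z = 0"
      by (rule IVT') (use neg p0 False x phi_cont[of x 0] in auto)
    then show ?thesis using that x by force
  qed
  then have "D z = 0" using phi_sq[OF z(1)] by simp
  then show False using D_pos[OF z(1)] by simp
qed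

lemma sqrt_D: "\<bar>x\<bar> < 1/3 \<Longrightarrow> sqrt (D x) = phi x"
  using phi_sq phi_pos by (intro real_sqrt_unique) (auto intro: less_imp_le)

theorem mainTheorem11:
  fixes x :: real
  assumes "x \<noteq> 0" and "\<bar>x\<bar> < 1/3"
  shows "((\<lambda>s. real (f s) * x ^ s) sums ((-1 + x + sqrt (D x))^2 / (4 * x^2 * D x))) \<and>
         ((\<lambda>s. real (g s) * x ^ s) sums
           (- ((-1 + x + sqrt (D x))^3) / (8 * x^2 * (D x) powr (3/2))))"
proof -
  note x = assms(2)
  define m where "m = eval_fps Mf x"
  define S where "S = sqrt (D x)"
  have S: "S = 1 - x - 2 * x ^ 2 * m" unfolding S_def m_def sqrt_D[OF x] phi_def ..
  have Spos: "S > 0" unfolding S_def using D_pos[OF x] by simp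
  have DS: "D x = S ^ 2" unfolding S_def using D_pos[OF x] by simp
  have q: "m = 1 + x * m + x ^ 2 * m ^ 2" using M_quad_eval[OF x] unfolding m_def .
  have m0: "m \<noteq> 0" using q by auto
  have "1 - x ^ 2 * m ^ 2 - m * S = (1 + x * m + x ^ 2 * m ^ 2) - m"
    unfolding S by (simp add: algebra_simps power2_eq_square)
  then have K: "1 - x ^ 2 * m ^ 2 = m * S" using q by simp
  have y: "eval_fps Yf x = x ^ 2 * m ^ 2" using ev_Yf[OF x] unfolding m_def .
  have e1: "-1 + x + S = - (2 * x ^ 2 * m)" unfolding S by simp
  define Fv where "Fv = eval_fps Ff x"
  have sF: "(\<lambda>s. real (f s) * x ^ s) sums Fv"
    using sums_eval_fps[OF good_norm[OF good_Ff x]] unfolding Fv_def by (simp add: Ff_def)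
  have "eval_fps ((1 - Yf) ^ 2 * Ff) x = eval_fps (Mf ^ 2 * Yf) x" using Ff_eq by simp
  moreover have "eval_fps ((1 - Yf) ^ 2 * Ff) x = (1 - x ^ 2 * m ^ 2) ^ 2 * Fv"
    unfolding Fv_def
    by (simp only: ev_mult[OF good_power[OF good_diff[OF good_1 good_Yf]] good_Ff x]
        ev_power[OF good_diff[OF good_1 good_Yf] x] ev_diff[OF good_1 good_Yf x] eval_fps_1 y)
  moreover have "eval_fps (Mf ^ 2 * Yf) x = m ^ 2 * (x ^ 2 * m ^ 2)"
    by (simp only: ev_mult[OF good_power[OF good_Mf] good_Yf x] ev_power[OF good_Mf x] y m_def)
  ultimately have "(1 - x ^ 2 * m ^ 2) ^ 2 * Fv = m ^ 2 * (x ^ 2 * m ^ 2)" by simp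
  then have "m ^ 2 * (S ^ 2 * Fv) = m ^ 2 * (x ^ 2 * m ^ 2)" unfolding K by (simp add: algebra_simps)
  then have F1: "S ^ 2 * Fv = x ^ 2 * m ^ 2" using m0 by simp
  have Fval: "(-1 + x + sqrt (D x))^2 / (4 * x^2 * D x) = Fv"
  proof -
    have "(-1 + x + sqrt (D x))^2 / (4 * x^2 * D x) = (4 * x ^ 2 * (x ^ 2 * m ^ 2)) / (4 * x ^ 2 * S ^ 2)"
      unfolding S_def[symmetric] unfolding e1 DS by (simp add: algebra_simps power2_eq_square)
    also have "\<dots> = (x ^ 2 * m ^ 2) / S ^ 2" using assms(1) by simp
    also have "\<dots> = Fv" using F1 Spos by (simp add: field_simps)
    finally show ?thesis .
  qed
  define Gv where "Gv = eval_fps Gf x"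
  have sG: "(\<lambda>s. real (g s) * x ^ s) sums Gv"
    using sums_eval_fps[OF good_norm[OF good_Gf x]] unfolding Gv_def by (simp add: Gf_def)
  have "eval_fps ((1 - Yf) ^ 3 * Gf) x = eval_fps (Mf ^ 2 * Yf ^ 2) x" using Gf_eq by simp
  moreover have "eval_fps ((1 - Yf) ^ 3 * Gf) x = (1 - x ^ 2 * m ^ 2) ^ 3 * Gv"
    unfolding Gv_def
    by (simp only: ev_mult[OF good_power[OF good_diff[OF good_1 good_Yf]] good_Gf x]
        ev_power[OF good_diff[OF good_1 good_Yf] x] ev_diff[OF good_1 good_Yf x] eval_fps_1 y)
  moreover have "eval_fps (Mf ^ 2 * Yf ^ 2) x = m ^ 2 * (x ^ 2 * m ^ 2) ^ 2"
    by (simp only: ev_mult[OF good_power[OF good_Mf] good_power[OF good_Yf] x] ev_power[OF good_Mf x]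
        ev_power[OF good_Yf x] y m_def)
  ultimately have "(1 - x ^ 2 * m ^ 2) ^ 3 * Gv = m ^ 2 * (x ^ 2 * m ^ 2) ^ 2" by simp
  then have "m ^ 3 * (S ^ 3 * Gv) = m ^ 3 * (x ^ 4 * m ^ 3)" unfolding K by (simp add: algebra_simps power2_eq_square power3_eq_cube power4_eq_xxxx)
  then have G1: "S ^ 3 * Gv = x ^ 4 * m ^ 3" using m0 by simp
  have pw: "D x powr (3/2) = S ^ 3"
  proof -
    have "D x powr (3/2) = (S powr 2) powr (3/2)" using DS Spos by simp
    also have "\<dots> = S powr 3" by (simp add: powr_powr)
    also have "\<dots> = S ^ 3" using Spos by simp
    finally show ?thesis .
  qed
  have Gval: "- ((-1 + x + sqrt (D x))^3) / (8 * x^2 * (D x) powr (3/2)) = Gv"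
  proof -
    have "- ((-1 + x + sqrt (D x))^3) / (8 * x^2 * (D x) powr (3/2)) = (8 * x ^ 2 * (x ^ 4 * m ^ 3)) / (8 * x ^ 2 * S ^ 3)"
      unfolding S_def[symmetric] unfolding e1 pw by (simp add: algebra_simps power3_eq_cube)
    also have "\<dots> = (x ^ 4 * m ^ 3) / S ^ 3" using assms(1) by simp
    also have "\<dots> = Gv" using G1 Spos by (simp add: field_simps)
    finally show ?thesis .
  qed
  show ?thesis using sF sG Fval Gval by simp
qed


end
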